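(* Let $G_1$ and $G_2$ be two vertex-disjoint finite simple graphs, each having at least one edge. Then $\mathcal{NC}(G_1\sqcup G_2)$ is not shellable, and hence not vertex decomposable.
   Context: For a finite simple graph $H$, the non-cover complex $\mathcal{NC}(H)$ is the simplicial complex whose simplices are the subsets $S\subseteq V(H)$ such that $V(H)\setminus S$ contains both endpoints of some edge of $H$. A simplicial complex $K$ is shellable if its facets (maximal simplices) can be ordered $F_1,\dots,F_t$ so that for each $k=2,\dots,t$ the complex $\big(\bigcup_{j<k}\Delta^{F_j}\big)\cap\Delta^{F_k}$ is pure of dimension $\dim(\Delta^{F_k})-1$, where $\Delta^F$ denotes the full simplex on $F$. For a simplicial complex $K$ and a vertex $v$, $\mathrm{lk}(v,K)=\{\tau\in K: v\notin\tau,\ \tau\cup\{v\}\in K\}$ and $\mathrm{del}(v,K)=\{\tau\in K: v\notin\tau\}$. $K$ is vertex decomposable if $K$ is a simplex (including $\{\emptyset\}$), or $K$ has a vertex $v$ such that $\mathrm{lk}(v,K)$ and $\mathrm{del}(v,K)$ are vertex decomposable and every facet of $\mathrm{del}(v,K)$ is a facet of $K$. *)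

theory Defs
  imports Main
begin

definition simple_graph :: "'a set \<Rightarrow> 'a set set \<Rightarrow> bool" where
  "simple_graph V E \<longleftrightarrow> finite V \<and> (\<forall>e\<in>E. e \<subseteq> V \<and> card e = 2)"

definition non_cover_complex :: "'a set \<Rightarrow> 'a set set \<Rightarrow> 'a set set" where
  "non_cover_complex V E = {S. S \<subseteq> V \<and> (\<exists>e\<in>E. e \<subseteq> V - S)}"

text \<open>Simplicial complexes are represented as sets of (finite) sets closed under subsets.\<close>
definition facets :: "'a set set \<Rightarrow> 'a set set" where
  "facets K = {F \<in> K. \<forall>G\<in>K. F \<subseteq> G \<longrightarrow> G = F}"

definition sdim :: "'a set \<Rightarrow> int" where
  "sdim F = int (card F) - 1"

definition pure_of_dim :: "'a set set \<Rightarrow> int \<Rightarrow> bool" where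
  "pure_of_dim K d \<longleftrightarrow> (\<forall>F\<in>facets K. sdim F = d)"

definition shellable :: "'a set set \<Rightarrow> bool" where
  "shellable K \<longleftrightarrow> (\<exists>fs. distinct fs \<and> set fs = facets K \<and>
     (\<forall>k. 0 < k \<and> k < length fs \<longrightarrow>
        pure_of_dim ((\<Union>j<k. Pow (fs ! j)) \<inter> Pow (fs ! k)) (sdim (fs ! k) - 1)))"

definition link :: "'a \<Rightarrow> 'a set set \<Rightarrow> 'a set set" where
  "link v K = {\<tau>\<in>K. v \<notin> \<tau> \<and> insert v \<tau> \<in> K}"

definition deletion :: "'a \<Rightarrow> 'a set set \<Rightarrow> 'a set set" where
  "deletion v K = {\<tau>\<in>K. v \<notin> \<tau>}"

inductive vertex_decomposable :: "'a set set \<Rightarrow> bool" where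
  simplex: "finite F \<Longrightarrow> vertex_decomposable (Pow F)"
| decomp: "\<lbrakk> {v} \<in> K; vertex_decomposable (link v K); vertex_decomposable (deletion v K);
             facets (deletion v K) \<subseteq> facets K \<rbrakk> \<Longrightarrow> vertex_decomposable K"

end

theory Submission
  imports Defs
begin


definition adjf :: "'a set set \<Rightarrow> 'a set \<Rightarrow> 'a set \<Rightarrow> bool" where
  "adjf K F G \<longleftrightarrow> F \<in> facets K \<and> G \<in> facets K \<and> card (F \<inter> G) + 1 = card F \<and> card (F \<inter> G) + 1 = card G"

definition sconn :: "'a set set \<Rightarrow> bool" where
  "sconn K \<longleftrightarrow> (\<forall>F\<in>facets K. \<forall>G\<in>facets K. (adjf K)\<^sup>*\<^sup>* F G)"

definition purec :: "'a set set \<Rightarrow> bool" where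
  "purec K \<longleftrightarrow> (\<exists>d. \<forall>F\<in>facets K. card F = d)"

definition goodc :: "'a set set \<Rightarrow> bool" where
  "goodc K \<longleftrightarrow> finite K \<and> (\<forall>F\<in>K. finite F) \<and> (\<forall>F\<in>K. \<forall>G. G \<subseteq> F \<longrightarrow> G \<in> K)"

lemma facet_above:
  assumes "finite K" "X \<in> K" shows "\<exists>F\<in>facets K. X \<subseteq> F"
proof -
  from finite_has_maximal2[OF assms] obtain m where "m \<in> K" "X \<subseteq> m" "\<forall>b\<in>K. m \<subseteq> b \<longrightarrow> m = b"
    by blast
  then have "m \<in> facets K" unfolding facets_def by blast
  then show ?thesis using \<open>X \<subseteq> m\<close> by blast
qed

lemma facets_link:
  assumes "goodc K" "H \<in> facets (link v K)" shows "insert v H \<in> facets K" "v \<notin> H"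
proof -
  have H: "H \<in> K" "v \<notin> H" "insert v H \<in> K" and mx: "\<forall>G\<in>link v K. H \<subseteq> G \<longrightarrow> G = H"
    using assms(2) unfolding facets_def link_def by blast+
  show "v \<notin> H" by fact
  show "insert v H \<in> facets K" unfolding facets_def
  proof (intro CollectI conjI ballI impI)
    show "insert v H \<in> K" by fact
    fix G assume "G \<in> K" "insert v H \<subseteq> G"
    then have "G - {v} \<in> K" using assms(1) unfolding goodc_def by blast
    moreover have "insert v (G - {v}) = G" using \<open>insert v H \<subseteq> G\<close> by auto
    ultimately have "G - {v} \<in> link v K" unfolding link_def using \<open>G \<in> K\<close> by auto
    then have "G - {v} = H" using mx \<open>insert v H \<subseteq> G\<close> H(2) by auto
    then show "G = insert v H" using \<open>insert v H \<subseteq> G\<close> by auto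
  qed
qed

lemma facets_split:
  assumes "goodc K" "F \<in> facets K"
  shows "(v \<notin> F \<and> F \<in> facets (deletion v K)) \<or> (v \<in> F \<and> F - {v} \<in> facets (link v K))"
proof (cases "v \<in> F")
  case False
  then show ?thesis using assms(2) unfolding facets_def deletion_def by auto
next
  case True
  have FK: "F \<in> K" and mx: "\<forall>G\<in>K. F \<subseteq> G \<longrightarrow> G = F" using assms(2) unfolding facets_def by auto
  have "F - {v} \<in> K" using assms(1) FK unfolding goodc_def by blast
  moreover have "insert v (F - {v}) = F" using True by auto
  ultimately have L: "F - {v} \<in> link v K" unfolding link_def using FK by auto
  have "F - {v} \<in> facets (link v K)" unfolding facets_def
  proof (intro CollectI conjI ballI impI)
    show "F - {v} \<in> link v K" by fact
    fix G assume "G \<in> link v K" "F - {v} \<subseteq> G"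
    then have "insert v G \<in> K" "v \<notin> G" unfolding link_def by auto
    moreover have "F \<subseteq> insert v G" using \<open>F - {v} \<subseteq> G\<close> by auto
    ultimately have "insert v G = F" using mx by auto
    then show "G = F - {v}" using \<open>v \<notin> G\<close> by auto
  qed
  then show ?thesis using True by auto
qed

lemma path_insert:
  assumes "goodc K" "(adjf (link v K))\<^sup>*\<^sup>* H H'"
  shows "(adjf K)\<^sup>*\<^sup>* (insert v H) (insert v H')"
  using assms(2)
proof (induction rule: rtranclp_induct)
  case base then show ?case by simp
next
  case (step y z)
  have a: "y \<in> facets (link v K)" "z \<in> facets (link v K)"
    "card (y \<inter> z) + 1 = card y" "card (y \<inter> z) + 1 = card z"
    using step(2) unfolding adjf_def by blast+
  have y: "insert v y \<in> facets K" "v \<notin> y" using facets_link[OF assms(1) a(1)] by blast+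
  have z: "insert v z \<in> facets K" "v \<notin> z" using facets_link[OF assms(1) a(2)] by blast+
  have "y \<in> K" "z \<in> K" using a(1,2) unfolding facets_def link_def by blast+
  then have fy: "finite y" "finite z" using assms(1) unfolding goodc_def by blast+
  have fyz: "finite (y \<inter> z)" "v \<notin> y \<inter> z" using fy y(2) by auto
  have "insert v y \<inter> insert v z = insert v (y \<inter> z)" by blast
  then have c1: "card (insert v y \<inter> insert v z) = card (y \<inter> z) + 1" using fyz by simp
  have c2: "card (insert v y) = card y + 1" using fy(1) y(2) by simp
  have c3: "card (insert v z) = card z + 1" using fy(2) z(2) by simp
  have "adjf K (insert v y) (insert v z)" unfolding adjf_def using y(1) z(1) c1 c2 c3 a(3,4) by simp
  then show ?case using step(3) by simp
qed

lemma adjf_mono: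
  assumes "facets D \<subseteq> facets K" "(adjf D)\<^sup>*\<^sup>* F G" shows "(adjf K)\<^sup>*\<^sup>* F G"
proof -
  have "adjf D \<le> adjf K" using assms(1) unfolding adjf_def by auto
  then show ?thesis by (rule predicate2D[OF rtranclp_mono assms(2)])
qed

definition dcl :: "'a set set \<Rightarrow> bool" where
  "dcl K \<longleftrightarrow> (\<forall>F\<in>K. \<forall>G. G \<subseteq> F \<longrightarrow> G \<in> K)"

lemma vd_inv:
  assumes "vertex_decomposable K" shows "dcl K \<longrightarrow> goodc K \<and> (purec K \<longrightarrow> sconn K)"
  using assms
proof (induction rule: vertex_decomposable.induct)
  case (simplex F)
  have fa: "facets (Pow F) = {F}" unfolding facets_def by auto
  have "goodc (Pow F)" unfolding goodc_def using simplex by (auto intro: finite_subset)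
  moreover have "sconn (Pow F)" unfolding sconn_def fa by simp
  ultimately show ?case by simp
next
  case (decomp v K)
  let ?L = "link v K" and ?D = "deletion v K"
  show ?case
  proof
    assume dK: "dcl K"
    have "dcl ?L" unfolding dcl_def
    proof (intro ballI allI impI)
      fix F G assume F: "F \<in> ?L" and G: "G \<subseteq> F"
      have "F \<in> K" "v \<notin> F" "insert v F \<in> K" using F unfolding link_def by auto
      moreover have "insert v G \<subseteq> insert v F" using G by blast
      ultimately have "G \<in> K" "insert v G \<in> K" "v \<notin> G" using dK G unfolding dcl_def by blast+
      then show "G \<in> ?L" unfolding link_def by blast
    qed
    moreover have "dcl ?D" using dK unfolding dcl_def deletion_def by auto
    ultimately have gL: "goodc ?L" and gD: "goodc ?D" and
      sL: "purec ?L \<Longrightarrow> sconn ?L" and sD: "purec ?D \<Longrightarrow> sconn ?D" using decomp.IH by auto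
    have Keq: "K = ?D \<union> insert v ` ?L"
    proof
      show "K \<subseteq> ?D \<union> insert v ` ?L"
      proof
        fix F assume F: "F \<in> K"
        show "F \<in> ?D \<union> insert v ` ?L"
        proof (cases "v \<in> F")
          case False then show ?thesis using F unfolding deletion_def by auto
        next
          case True
          have "insert v (F - {v}) = F" using True by auto
          moreover have "F - {v} \<in> K" using dK F unfolding dcl_def by blast
          ultimately show ?thesis unfolding link_def deletion_def using F
            by (auto intro!: image_eqI[of _ _ "F - {v}"])
        qed
      qed
      show "?D \<union> insert v ` ?L \<subseteq> K" unfolding link_def deletion_def by auto
    qed
    have gK: "goodc K"
    proof -
      have "finite ?D" "finite ?L" using gL gD unfolding goodc_def by blast+
      then have "finite (?D \<union> insert v ` ?L)" by blast
      then have "finite K" using Keq by simp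
      moreover have "\<forall>F\<in>K. finite F" using Keq gL gD unfolding goodc_def by auto
      ultimately show ?thesis using dK unfolding goodc_def dcl_def by auto
    qed
    show "goodc K \<and> (purec K \<longrightarrow> sconn K)"
    proof (intro conjI impI)
      show "goodc K" by fact
      assume "purec K"
      then obtain d where pd: "\<forall>F\<in>facets K. card F = d" unfolding purec_def by auto
      have pD: "purec ?D" using pd decomp.hyps(4) unfolding purec_def by blast
      have cL: "\<forall>H\<in>facets ?L. card H + 1 = d"
      proof
        fix H assume H: "H \<in> facets ?L"
        have "finite H" using H gL unfolding goodc_def facets_def by auto
        then show "card H + 1 = d" using facets_link[OF gK H] pd by auto
      qed
      then have "\<forall>H\<in>facets ?L. card H = d - 1" by auto
      then have pL: "purec ?L" unfolding purec_def by blast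
      have scD: "sconn ?D" and scL: "sconn ?L" using sL sD pD pL by auto
      have "{} \<in> K" using dK decomp.hyps(1) unfolding dcl_def by blast
      then have "{} \<in> ?L" using decomp.hyps(1) unfolding link_def by auto
      moreover have "finite ?L" using gL unfolding goodc_def by blast
      ultimately obtain H where H: "H \<in> facets ?L" using facet_above[of ?L "{}"] by blast
      have HK: "insert v H \<in> facets K" "v \<notin> H" using facets_link[OF gK H] by auto
      have "H \<in> ?D" using H unfolding facets_def link_def deletion_def by auto
      moreover have "finite ?D" using gD unfolding goodc_def by blast
      ultimately obtain D0 where D0: "D0 \<in> facets ?D" "H \<subseteq> D0" using facet_above[of ?D H] by blast
      have D0K: "D0 \<in> facets K" "v \<notin> D0" using D0 decomp.hyps(4) unfolding facets_def deletion_def by auto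
      have fH: "finite H" using H gL unfolding goodc_def facets_def by auto
      have int: "D0 \<inter> insert v H = H" using D0 D0K by auto
      have cH: "card H + 1 = d" using cL H by auto
      have c1: "card (insert v H) = d" using fH HK(2) cH by simp
      have c2: "card D0 = d" using pd D0K(1) by blast
      have int2: "insert v H \<inter> D0 = H" using int by blast
      have br1: "adjf K D0 (insert v H)" unfolding adjf_def using int HK(1) D0K(1) c1 c2 cH
        by simp
      have br2: "adjf K (insert v H) D0" unfolding adjf_def using int2 HK(1) D0K(1) c1 c2 cH
        by simp
      have toD0: "(adjf K)\<^sup>*\<^sup>* F D0" and fromD0: "(adjf K)\<^sup>*\<^sup>* D0 F" if "F \<in> facets K" for F
      proof -
        have "(adjf K)\<^sup>*\<^sup>* F D0 \<and> (adjf K)\<^sup>*\<^sup>* D0 F"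
        proof (cases "v \<notin> F \<and> F \<in> facets ?D")
          case True
          then have "F \<in> facets ?D" by blast
          then have "(adjf ?D)\<^sup>*\<^sup>* F D0" "(adjf ?D)\<^sup>*\<^sup>* D0 F" using scD D0(1) unfolding sconn_def by blast+
          then show ?thesis using adjf_mono[OF decomp.hyps(4)] by blast
        next
          case False
          then have F: "v \<in> F" "F - {v} \<in> facets ?L" using facets_split[OF gK that] by auto
          have e: "insert v (F - {v}) = F" using F by auto
          have "(adjf K)\<^sup>*\<^sup>* F (insert v H)" "(adjf K)\<^sup>*\<^sup>* (insert v H) F"
            using path_insert[OF gK, of v "F - {v}" H] path_insert[OF gK, of v H "F - {v}"] scL F H e
            unfolding sconn_def by auto
          then show ?thesis using br1 br2 rtranclp.rtrancl_into_rtrancl[of "adjf K" F "insert v H" D0]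
            converse_rtranclp_into_rtranclp[of "adjf K" D0 "insert v H" F] by blast
        qed
        then show "(adjf K)\<^sup>*\<^sup>* F D0" "(adjf K)\<^sup>*\<^sup>* D0 F" by auto
      qed
      show "sconn K" unfolding sconn_def
      proof (intro ballI)
        fix F G assume "F \<in> facets K" "G \<in> facets K"
        then show "(adjf K)\<^sup>*\<^sup>* F G" using toD0[of F] fromD0[of G] rtranclp_trans[of "adjf K" F D0 G] by blast
      qed
    qed
  qed
qed



lemma sg_union:
  assumes "simple_graph V1 E1" "simple_graph V2 E2"
  shows "simple_graph (V1 \<union> V2) (E1 \<union> E2)"
  using assms unfolding simple_graph_def by blast

lemma edge_props:
  assumes "simple_graph V E" "e \<in> E"
  shows "e \<subseteq> V" "card e = 2" "finite e" "e \<noteq> {}" "V - (V - e) = e"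
proof -
  show "e \<subseteq> V" "card e = 2" using assms unfolding simple_graph_def by blast+
  then show "finite e" "e \<noteq> {}" by (auto intro: card_ge_0_finite)
  show "V - (V - e) = e" using \<open>e \<subseteq> V\<close> by blast
qed

lemma nc_facets:
  assumes sg: "simple_graph V E"
  shows "facets (non_cover_complex V E) = (\<lambda>e. V - e) ` E"
proof
  show "facets (non_cover_complex V E) \<subseteq> (\<lambda>e. V - e) ` E"
  proof
    fix F assume F: "F \<in> facets (non_cover_complex V E)"
    then have FK: "F \<in> non_cover_complex V E"
      and mx: "\<forall>G\<in>non_cover_complex V E. F \<subseteq> G \<longrightarrow> G = F" unfolding facets_def by blast+
    then obtain e where e: "e \<in> E" "e \<subseteq> V - F" "F \<subseteq> V" unfolding non_cover_complex_def by blast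
    have "V - (V - e) = e" using edge_props[OF sg e(1)] by blast
    then have "V - e \<in> non_cover_complex V E" unfolding non_cover_complex_def using e(1) by blast
    moreover have "F \<subseteq> V - e" using e by blast
    ultimately have "V - e = F" using mx by blast
    then show "F \<in> (\<lambda>e. V - e) ` E" using e(1) by blast
  qed
  show "(\<lambda>e. V - e) ` E \<subseteq> facets (non_cover_complex V E)"
  proof
    fix F assume "F \<in> (\<lambda>e. V - e) ` E"
    then obtain e where e: "e \<in> E" "F = V - e" by blast
    note ep = edge_props[OF sg e(1)]
    have FK: "F \<in> non_cover_complex V E" unfolding non_cover_complex_def using e ep by blast
    show "F \<in> facets (non_cover_complex V E)" unfolding facets_def
    proof (intro CollectI conjI ballI impI)
      show "F \<in> non_cover_complex V E" by fact
      fix G assume G: "G \<in> non_cover_complex V E" "F \<subseteq> G"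
      then obtain e' where e': "e' \<in> E" "e' \<subseteq> V - G" "G \<subseteq> V" unfolding non_cover_complex_def by blast
      have "e' \<subseteq> e" using e' G(2) e(2) by blast
      then have "e' = e" using card_subset_eq[OF ep(3)] edge_props(2)[OF sg e'(1)] ep(2) by simp
      then show "G = F" using e' G(2) e(2) by blast
    qed
  qed
qed

lemma nc_dcl: "dcl (non_cover_complex V E)"
  unfolding dcl_def non_cover_complex_def by blast

lemma card_diff_edge:
  assumes sg: "simple_graph V E" "e \<in> E" shows "card (V - e) = card V - 2"
proof -
  have "finite V" using sg unfolding simple_graph_def by blast
  then show ?thesis using card_Diff_subset[OF edge_props(3,1)[OF sg]] edge_props(2)[OF sg] by simp
qed

lemma card_diff_two:
  assumes sg: "simple_graph V E" "a \<in> E" "b \<in> E" "a \<inter> b = {}"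
  shows "card ((V - a) \<inter> (V - b)) = card V - 4" "card V \<ge> 4"
proof -
  have fV: "finite V" using sg unfolding simple_graph_def by blast
  note pa = edge_props[OF sg(1,2)] and pb = edge_props[OF sg(1,3)]
  have cu: "card (a \<union> b) = 4" using card_Un_disjoint[OF pa(3) pb(3) sg(4)] pa(2) pb(2) by simp
  have sub: "a \<union> b \<subseteq> V" using pa pb by blast
  have "(V - a) \<inter> (V - b) = V - (a \<union> b)" by blast
  then show "card ((V - a) \<inter> (V - b)) = card V - 4"
    using card_Diff_subset[OF _ sub] pa(3) pb(3) cu by simp
  show "card V \<ge> 4" using card_mono[OF fV sub] cu by simp
qed



theorem proposition4p4:
  fixes V1 V2 :: "'a set" and E1 E2 :: "'a set set"
  assumes "simple_graph V1 E1" and "simple_graph V2 E2"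
    and "V1 \<inter> V2 = {}"
    and "E1 \<noteq> {}" and "E2 \<noteq> {}"
  shows "\<not> shellable (non_cover_complex (V1 \<union> V2) (E1 \<union> E2)) \<and>
         \<not> vertex_decomposable (non_cover_complex (V1 \<union> V2) (E1 \<union> E2))"
proof -
  define V where "V = V1 \<union> V2"
  define E where "E = E1 \<union> E2"
  define K where "K = non_cover_complex V E"
  have sg: "simple_graph V E" unfolding V_def E_def using sg_union assms(1,2) by blast
  have E1s: "e \<subseteq> V1" if "e \<in> E1" for e using assms(1) that unfolding simple_graph_def by blast
  have E2s: "e \<subseteq> V2" if "e \<in> E2" for e using assms(2) that unfolding simple_graph_def by blast
  have side: "e \<in> E1 \<longleftrightarrow> e \<subseteq> V1" if "e \<in> E" for e
  proof
    show "e \<in> E1 \<Longrightarrow> e \<subseteq> V1" using E1s by blast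
    assume "e \<subseteq> V1"
    moreover have "e \<noteq> {}" using edge_props(4)[OF sg that] .
    ultimately show "e \<in> E1" using that E2s assms(3) unfolding E_def by blast
  qed
  have disj: "a \<inter> b = {}" if "a \<in> E1" "b \<in> E2" for a b
    using E1s[OF that(1)] E2s[OF that(2)] assms(3) by blast
  obtain e1 where e1: "e1 \<in> E1" using assms(4) by blast
  obtain e2 where e2: "e2 \<in> E2" using assms(5) by blast
  have e1E: "e1 \<in> E" and e2E: "e2 \<in> E" unfolding E_def using e1 e2 by blast+
  have fac: "facets K = (\<lambda>e. V - e) ` E" unfolding K_def using nc_facets[OF sg] .
  have fac_edge: "\<exists>e\<in>E. F = V - e" if "F \<in> facets K" for F using that fac by blast
  have notVD: "\<not> vertex_decomposable K"
  proof
    assume vd: "vertex_decomposable K"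
    have pure: "purec K" unfolding purec_def fac using card_diff_edge[OF sg] by blast
    have "sconn K" using vd_inv[OF vd] nc_dcl pure unfolding K_def by blast
    then have path: "(adjf K)\<^sup>*\<^sup>* (V - e1) (V - e2)" unfolding sconn_def fac using e1E e2E by blast
    have "\<exists>e\<in>E1. V - e2 = V - e"
      using path
    proof (induction rule: rtranclp_induct)
      case base then show ?case using e1 by blast
    next
      case (step y z)
      then obtain a where a: "a \<in> E1" "y = V - a" by blast
      have aE: "a \<in> E" unfolding E_def using a by blast
      have adj: "z \<in> facets K" "card (y \<inter> z) + 1 = card y" using step(2) unfolding adjf_def by blast+
      obtain b where b: "b \<in> E" "z = V - b" using fac_edge[OF adj(1)] by blast
      show ?case
      proof (cases "b \<in> E1")
        case True then show ?thesis using b by blast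
      next
        case False
        then have "b \<in> E2" using b(1) unfolding E_def by blast
        then have ab: "a \<inter> b = {}" using disj a(1) by blast
        have "card (y \<inter> z) = card V - 4" "card V \<ge> 4" using card_diff_two[OF sg aE b(1) ab] a b by simp_all
        moreover have "card y = card V - 2" using card_diff_edge[OF sg aE] a by simp
        ultimately show ?thesis using adj(2) by simp
      qed
    qed
    then obtain e where e: "e \<in> E1" "V - e2 = V - e" by blast
    have "e \<in> E" unfolding E_def using e by blast
    moreover have "V - (V - e2) = V - (V - e)" using e(2) by simp
    ultimately have "e2 = e" using edge_props(5)[OF sg e2E] edge_props(5)[OF sg \<open>e \<in> E\<close>] by simp
    then show False using disj[OF e(1) e2] edge_props(4)[OF sg e2E] by blast
  qed
  have notSh: "\<not> shellable K"
  proof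
    assume "shellable K"
    then obtain fs where fs: "distinct fs" "set fs = facets K"
      and sh: "\<And>k. 0 < k \<Longrightarrow> k < length fs \<Longrightarrow>
        pure_of_dim ((\<Union>j<k. Pow (fs ! j)) \<inter> Pow (fs ! k)) (sdim (fs ! k) - 1)"
      unfolding shellable_def by blast
    define n where "n = length fs"
    define ed where "ed i = V - fs ! i" for i
    have edp: "ed i \<in> E \<and> fs ! i = V - ed i" if "i < n" for i
    proof -
      have "fs ! i \<in> facets K" using that fs(2) nth_mem unfolding n_def by blast
      then obtain e where "e \<in> E" "fs ! i = V - e" using fac_edge by blast
      then show ?thesis unfolding ed_def using edge_props(5)[OF sg] by simp
    qed
    have idx: "\<exists>i<n. ed i = e" if "e \<in> E" for e
    proof -
      have "V - e \<in> set fs" using fs(2) fac that by blast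
      then obtain i where "i < n" "fs ! i = V - e" unfolding n_def in_set_conv_nth by blast
      then show ?thesis unfolding ed_def using edge_props(5)[OF sg that] by auto
    qed
    define S where "S i \<longleftrightarrow> ed i \<subseteq> V1" for i
    obtain i1 where i1: "i1 < n" "ed i1 = e1" using idx e1E by blast
    obtain i2 where i2: "i2 < n" "ed i2 = e2" using idx e2E by blast
    have n0: "0 < n" using i1 by simp
    have S1: "S i1" unfolding S_def using i1 E1s e1 by simp
    have S2: "\<not> S i2" using i2(2) E2s[OF e2] edge_props(4)[OF sg e2E] assms(3) unfolding S_def by blast
    have ex: "\<exists>i. i < n \<and> S i \<noteq> S 0" using S1 S2 i1 i2 by blast
    define k where "k = (LEAST i. i < n \<and> S i \<noteq> S 0)"
    have k: "k < n" "S k \<noteq> S 0" using LeastI_ex[OF ex] unfolding k_def by blast+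
    have before: "S j = S 0" if "j < k" for j
      using not_less_Least[of j "\<lambda>i. i < n \<and> S i \<noteq> S 0"] that k(1) unfolding k_def by auto
    have k0: "0 < k" using k(2) by (cases k) auto
    have sideE: "ed i \<in> E1 \<longleftrightarrow> S i" if "i < n" for i using side edp[OF that] unfolding S_def by blast
    have inE: "ed i \<in> E1 \<or> ed i \<in> E2" if "i < n" for i using edp[OF that] unfolding E_def by blast
    have dj: "ed j \<inter> ed k = {}" if "j < k" for j
    proof -
      have jn: "j < n" using that k(1) by simp
      have "S j \<noteq> S k" using before[OF that] k(2) by simp
      then have "(ed j \<in> E1 \<and> ed k \<in> E2) \<or> (ed k \<in> E1 \<and> ed j \<in> E2)"
        using sideE[OF jn] sideE[OF k(1)] inE[OF jn] inE[OF k(1)] by blast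
      then show ?thesis using disj by blast
    qed
    have fV: "finite V" using sg unfolding simple_graph_def by blast
    have cjk: "card (fs ! j \<inter> fs ! k) = card V - 4" "card V \<ge> 4" if "j < k" for j
    proof -
      have jn: "j < n" using that k(1) by simp
      have "fs ! j \<inter> fs ! k = (V - ed j) \<inter> (V - ed k)" using edp[OF jn] edp[OF k(1)] by simp
      then show "card (fs ! j \<inter> fs ! k) = card V - 4" "card V \<ge> 4"
        using card_diff_two[OF sg conjunct1[OF edp[OF jn]] conjunct1[OF edp[OF k(1)]] dj[OF that]] by simp_all
    qed
    define C where "C = (\<Union>j<k. Pow (fs ! j)) \<inter> Pow (fs ! k)"
    define X where "X = fs ! 0 \<inter> fs ! k"
    have XC: "X \<in> C" unfolding C_def X_def using k0 by blast
    have cX: "card X = card V - 4" using cjk[OF k0] unfolding X_def by simp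
    have XF: "X \<in> facets C" unfolding facets_def
    proof (intro CollectI conjI ballI impI)
      show "X \<in> C" by fact
      fix G assume G: "G \<in> C" "X \<subseteq> G"
      then obtain j where j: "j < k" "G \<subseteq> fs ! j \<inter> fs ! k" unfolding C_def by blast
      have "fs ! k \<subseteq> V" using edp[OF k(1)] by blast
      then have fin: "finite (fs ! j \<inter> fs ! k)" using fV finite_subset by blast
      have "card G \<le> card X" using card_mono[OF fin j(2)] cjk[OF j(1)] cX by simp
      moreover have "finite G" using fin j(2) finite_subset by blast
      ultimately show "G = X" using card_seteq[of G X] G(2) by blast
    qed
    have "sdim X = sdim (fs ! k) - 1" using sh[OF k0 k(1)[unfolded n_def]] XF
      unfolding pure_of_dim_def C_def by blast
    moreover have "card (fs ! k) = card V - 2" using edp[OF k(1)] card_diff_edge[OF sg] by simp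
    ultimately show False using cX cjk[OF k0] unfolding sdim_def by simp
  qed
  show ?thesis using notVD notSh unfolding K_def V_def E_def by blast
qed

end
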